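(* Let $q\ge1$. Let $0=s_0<s_1<\dots<s_q=1$ be nodes and $\{\lambda_n^{[q]}\}_{n=0}^q$ the corresponding Lagrange basis of $\mathcal{P}^q([0,1])$, and let $\{\lambda_m^{[q-1]}\}_{m=0}^{q-1}$ be the Lagrange basis of $\mathcal{P}^{q-1}([0,1])$ with respect to some set of $q$ distinct nodes in $[0,1]$. Define $a_{mn}=\int_0^1\dot\lambda_n^{[q]}(t)\lambda_{m-1}^{[q-1]}(t)\,dt$ for $m=1,\dots,q$, $n=0,\dots,q$, let $A=(a_{mn})_{m,n=1}^q$ (which is invertible) and $\bar A=(\bar a_{mn})=A^{-1}$. Then for every $m=1,\dots,q$, $$\sum_{n=1}^q\bar a_{mn}a_{n0}=-1.$$
   Context: $\mathcal{P}^q([0,1])$ is the space of polynomials of degree $\le q$ on $[0,1]$; the Lagrange basis for nodes $s_0,\dots,s_q$ is $\lambda_n(s)=\prod_{l\ne n}(s-s_l)/(s_n-s_l)$. *)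

theory Defs
  imports "HOL-Analysis.Analysis" "Jordan_Normal_Form.Matrix"
begin

definition lagrange_basis :: "(nat \<Rightarrow> real) \<Rightarrow> nat \<Rightarrow> nat \<Rightarrow> real \<Rightarrow> real" where
  "lagrange_basis s d n t = (\<Prod>l\<in>{0..d} - {n}. (t - s l) / (s n - s l))"

definition coef_a :: "(nat \<Rightarrow> real) \<Rightarrow> (nat \<Rightarrow> real) \<Rightarrow> nat \<Rightarrow> nat \<Rightarrow> nat \<Rightarrow> real" where
  "coef_a s r q m n = integral {0..1}
     (\<lambda>t. deriv (lagrange_basis s q n) t * lagrange_basis r (q - 1) (m - 1) t)"

definition mat_A :: "(nat \<Rightarrow> real) \<Rightarrow> (nat \<Rightarrow> real) \<Rightarrow> nat \<Rightarrow> real mat" where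
  "mat_A s r q = mat q q (\<lambda>(i, j). coef_a s r q (i + 1) (j + 1))"

end

theory Submission
  imports Defs "Jordan_Normal_Form.Determinant" "HOL-Computational_Algebra.Polynomial"
begin

definition lpoly :: "(nat \<Rightarrow> real) \<Rightarrow> nat \<Rightarrow> nat \<Rightarrow> real poly" where
  "lpoly s d n = (\<Prod>l\<in>{0..d} - {n}. [: - s l / (s n - s l), 1 / (s n - s l) :])"

lemma lagrange_poly: "lagrange_basis s d n = (\<lambda>t. poly (lpoly s d n) t)"
  unfolding lagrange_basis_def lpoly_def
  by (auto simp: poly_prod diff_divide_distrib intro!: prod.cong)

lemma degree_lpoly: assumes "n \<le> d" shows "degree (lpoly s d n) \<le> d"
proof -
  have "degree (lpoly s d n) \<le> (\<Sum>l\<in>{0..d} - {n}. degree [: - s l / (s n - s l), 1 / (s n - s l) :])"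
    unfolding lpoly_def by (rule order.trans[OF degree_prod_sum_le]) auto
  also have "\<dots> \<le> (\<Sum>l\<in>{0..d} - {n}. 1)"
    by (intro sum_mono) auto
  also have "\<dots> = d" using assms by simp
  finally show ?thesis .
qed

lemma lagrange_nodes:
  assumes inj: "inj_on s {0..d}" and "n \<le> d" "k \<le> d"
  shows "lagrange_basis s d n (s k) = (if k = n then 1 else 0)"
proof (cases "k = n")
  case True
  have "\<And>l. l \<in> {0..d} - {n} \<Longrightarrow> s n \<noteq> s l"
    using inj assms by (auto dest: inj_onD)
  then show ?thesis using True unfolding lagrange_basis_def by (auto intro!: prod.neutral)
next
  case False
  then show ?thesis using assms unfolding lagrange_basis_def
    by (auto intro!: prod_zero bexI[of _ k])
qed

lemma interp:
  fixes f :: "real poly"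
  assumes inj: "inj_on s {0..d}" and deg: "degree f \<le> d"
  shows "f = (\<Sum>m\<in>{0..d}. Polynomial.smult (poly f (s m)) (lpoly s d m))"
proof (rule poly_eqI_degree[where A = "s ` {0..d}"])
  fix x assume "x \<in> s ` {0..d}"
  then obtain k where k: "k \<le> d" "x = s k" by auto
  have "poly (\<Sum>m\<in>{0..d}. Polynomial.smult (poly f (s m)) (lpoly s d m)) x
      = (\<Sum>m\<in>{0..d}. poly f (s m) * (if k = m then 1 else 0))"
    using k inj by (auto simp: poly_sum lagrange_nodes lagrange_poly[symmetric] intro!: sum.cong)
  also have "\<dots> = poly f x" using k by (simp add: if_distrib[of "\<lambda>c. _ * c"] cong: if_cong)
  finally show "poly f x = poly (\<Sum>m\<in>{0..d}. Polynomial.smult (poly f (s m)) (lpoly s d m)) x" ..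
next
  have c: "card (s ` {0..d}) = Suc d" using inj by (simp add: card_image)
  show "degree f < card (s ` {0..d})" using c deg by simp
  have "degree (\<Sum>m\<in>{0..d}. Polynomial.smult (poly f (s m)) (lpoly s d m)) \<le> d"
    by (intro degree_sum_le) (auto simp: degree_lpoly)
  then show "degree (\<Sum>m\<in>{0..d}. Polynomial.smult (poly f (s m)) (lpoly s d m)) < card (s ` {0..d})"
    using c by simp
qed

lemma sum_lpoly: assumes inj: "inj_on s {0..d}" shows "(\<Sum>m\<in>{0..d}. lpoly s d m) = 1"
  using interp[OF inj, of 1] by simp

lemma pderiv_sum: "pderiv (sum f A) = (\<Sum>a\<in>A. pderiv (f a))"
  by (induct A rule: infinite_finite_induct) (auto simp: pderiv_add)

lemma deriv_poly: "deriv (\<lambda>t. poly p t) t = poly (pderiv p) t"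
  by (rule DERIV_imp_deriv[OF poly_DERIV])

lemma int_pp: "(\<lambda>t. poly P t * poly Q t) integrable_on {0..1::real}"
  by (intro integrable_continuous_interval continuous_intros)


lemma sum_shift1: "sum f {1..q} = (\<Sum>i<q. f (Suc i))"
  by (induct q) (auto simp: atLeastAtMostSuc_conv add.commute)

lemma sum_shift1': "sum f {Suc 0..q} = (\<Sum>i<q. f (Suc i))"
  using sum_shift1[of f q] by simp

lemma mono_s:
  assumes "\<And>i. i < q \<Longrightarrow> s i < s (Suc i)"
  shows "i < j \<Longrightarrow> j \<le> q \<Longrightarrow> (s i :: real) < s j"
proof (induct j)
  case 0 then show ?case by simp
next
  case (Suc j)
  show ?case
  proof (cases "i = j")
    case True then show ?thesis using assms Suc by auto
  next
    case False then have "s i < s j" using Suc by auto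
    also have "s j < s (Suc j)" using assms Suc by auto
    finally show ?thesis .
  qed
qed

theorem lemmaA1:
  fixes q :: nat and s r :: "nat \<Rightarrow> real"
  assumes q1: "q \<ge> 1"
    and s0: "s 0 = 0" and sq: "s q = 1"
    and s_mono: "\<And>i. i < q \<Longrightarrow> s i < s (Suc i)"
    and r_dist: "inj_on r {0..q-1}"
    and r_range: "\<And>i. i \<le> q - 1 \<Longrightarrow> r i \<in> {0..1}"
  shows "invertible_mat (mat_A s r q) \<and>
    (\<forall>Abar. Abar \<in> carrier_mat q q \<and> mat_A s r q * Abar = 1\<^sub>m q \<and> Abar * mat_A s r q = 1\<^sub>m q \<longrightarrow>
       (\<forall>m\<in>{1..q}. (\<Sum>n=1..q. Abar $$ (m - 1, n - 1) * coef_a s r q n 0) = -1))"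
proof -
  have inj_s: "inj_on s {0..q}"
  proof (rule inj_onI)
    fix x y assume "x \<in> {0..q}" "y \<in> {0..q}" "s x = s y"
    then show "x = y" using mono_s[of q s, OF s_mono, of x y] mono_s[of q s, OF s_mono, of y x]
      by (cases x y rule: linorder_cases) auto
  qed
  define L where "L n = lpoly s q n" for n
  define R where "R i = lpoly r (q - 1) i" for i
  have coef: "coef_a s r q m n = integral {0..1} (\<lambda>t. poly (pderiv (L n)) t * poly (R (m - 1)) t)"
    for m n unfolding coef_a_def lagrange_poly deriv_poly L_def R_def ..
  have rowsum: "(\<Sum>n\<in>{0..q}. coef_a s r q m n) = 0" for m
  proof -
    have "(\<Sum>n\<in>{0..q}. coef_a s r q m n)
        = integral {0..1} (\<lambda>t. \<Sum>n\<in>{0..q}. poly (pderiv (L n)) t * poly (R (m - 1)) t)"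
      unfolding coef by (rule integral_sum[symmetric]) (auto intro: int_pp)
    also have "(\<lambda>t. \<Sum>n\<in>{0..q}. poly (pderiv (L n)) t * poly (R (m - 1)) t)
        = (\<lambda>t. poly (pderiv (\<Sum>n\<in>{0..q}. L n)) t * poly (R (m - 1)) t)"
      by (simp add: pderiv_sum poly_sum sum_distrib_right)
    also have "(\<Sum>n\<in>{0..q}. L n) = 1" unfolding L_def by (rule sum_lpoly[OF inj_s])
    finally show ?thesis by simp
  qed
  have a0: "coef_a s r q m 0 = - (\<Sum>k<q. coef_a s r q m (Suc k))" for m
    using rowsum[of m] by (simp add: sum.atLeast_Suc_atMost[of 0 q] sum_shift1')
  have Acar: "mat_A s r q \<in> carrier_mat q q" by (simp add: mat_A_def)
  have Aent: "mat_A s r q $$ (i, j) = coef_a s r q (Suc i) (Suc j)" if "i < q" "j < q" for i j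
    using that by (simp add: mat_A_def)
  have part2: "\<forall>Abar. Abar \<in> carrier_mat q q \<and> mat_A s r q * Abar = 1\<^sub>m q \<and> Abar * mat_A s r q = 1\<^sub>m q \<longrightarrow>
       (\<forall>m\<in>{1..q}. (\<Sum>n=1..q. Abar $$ (m - 1, n - 1) * coef_a s r q n 0) = -1)"
  proof (intro allI impI ballI)
    fix Abar m assume H: "Abar \<in> carrier_mat q q \<and> mat_A s r q * Abar = 1\<^sub>m q \<and> Abar * mat_A s r q = 1\<^sub>m q"
      and m: "m \<in> {1..q}"
    define i where "i = m - 1"
    have i: "i < q" using m i_def by auto
    have prod: "(\<Sum>j<q. Abar $$ (i, j) * coef_a s r q (Suc j) (Suc k)) = (if i = k then 1 else 0)"
      if k: "k < q" for k
    proof -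
      have eq: "(Abar * mat_A s r q) $$ (i, k) = (\<Sum>j<q. Abar $$ (i, j) * coef_a s r q (Suc j) (Suc k))"
        using conjunct1[OF H] i k Acar by (auto simp: index_mult_mat scalar_prod_def Aent lessThan_atLeast0 intro!: sum.cong)
      have e: "(Abar * mat_A s r q) $$ (i, k) = (if i = k then 1 else 0)" using H i k by simp
      show ?thesis using e unfolding eq .
    qed
    have "(\<Sum>n=1..q. Abar $$ (m - 1, n - 1) * coef_a s r q n 0)
        = (\<Sum>j<q. Abar $$ (i, j) * coef_a s r q (Suc j) 0)"
      by (simp add: sum_shift1 sum_shift1' i_def)
    also have "\<dots> = - (\<Sum>j<q. \<Sum>k<q. Abar $$ (i, j) * coef_a s r q (Suc j) (Suc k))"
      by (simp add: a0 sum_distrib_left sum_negf)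
    also have "\<dots> = - (\<Sum>k<q. \<Sum>j<q. Abar $$ (i, j) * coef_a s r q (Suc j) (Suc k))"
      by (subst sum.swap) simp
    also have "\<dots> = - (\<Sum>k<q. (if i = k then 1 else 0))"
      using prod by simp
    also have "\<dots> = -1" using i by simp
    finally show "(\<Sum>n=1..q. Abar $$ (m - 1, n - 1) * coef_a s r q n 0) = -1" .
  qed
  have det: "det (mat_A s r q) \<noteq> 0"
  proof
    assume "det (mat_A s r q) = 0"
    then obtain v where v: "v \<in> carrier_vec q" "v \<noteq> 0\<^sub>v q" "mat_A s r q *\<^sub>v v = 0\<^sub>v q"
      using det_0_iff_vec_prod_zero_field[OF Acar] by auto
    have ker: "(\<Sum>j<q. coef_a s r q (Suc i) (Suc j) * v $ j) = 0" if "i < q" for i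
    proof -
      have e: "(mat_A s r q *\<^sub>v v) $ i = 0" using v that by simp
      have eq: "(mat_A s r q *\<^sub>v v) $ i = (\<Sum>j<q. coef_a s r q (Suc i) (Suc j) * v $ j)"
        using that v(1) Acar
        by (auto simp: scalar_prod_def Aent lessThan_atLeast0 intro!: sum.cong)
      show ?thesis using e unfolding eq .
    qed
    define P' where "P' = (\<Sum>j<q. Polynomial.smult (v $ j) (pderiv (L (Suc j))))"
    have h1: "integral {0..1} (\<lambda>t. poly P' t * poly (R i) t) = 0" if "i \<le> q - 1" for i
    proof -
      have "integral {0..1} (\<lambda>t. poly P' t * poly (R i) t)
          = integral {0..1} (\<lambda>t. \<Sum>j<q. v $ j * (poly (pderiv (L (Suc j))) t * poly (R i) t))"
        by (simp add: P'_def poly_sum sum_distrib_right mult.assoc)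
      also have "\<dots> = (\<Sum>j<q. v $ j * coef_a s r q (Suc i) (Suc j))"
        by (subst integral_sum) (auto intro!: integrable_continuous_interval continuous_intros simp: coef)
      also have "\<dots> = 0" using ker[of i] that q1 by (simp add: mult.commute)
      finally show ?thesis .
    qed
    have degP': "degree P' \<le> q - 1"
      unfolding P'_def
      by (intro degree_sum_le) (auto intro!: order.trans[OF degree_smult_le] simp: degree_pderiv L_def
          intro!: diff_le_mono degree_lpoly)
    have ip: "P' = (\<Sum>i\<in>{0..q-1}. Polynomial.smult (poly P' (r i)) (R i))"
      unfolding R_def by (rule interp[OF r_dist degP'])
    have h2: "integral {0..1} (\<lambda>t. poly P' t * poly P' t) = 0"
    proof -
      have "(\<lambda>t. poly P' t * poly P' t)
          = (\<lambda>t. \<Sum>i\<in>{0..q-1}. poly P' (r i) * (poly P' t * poly (R i) t))"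
        apply (rule ext)
        apply (subst (2) ip)
        by (simp add: poly_sum sum_distrib_left mult.assoc mult.left_commute)
      then have "integral {0..1} (\<lambda>t. poly P' t * poly P' t)
          = (\<Sum>i\<in>{0..q-1}. poly P' (r i) * integral {0..1} (\<lambda>t. poly P' t * poly (R i) t))"
        by (simp, subst integral_sum) (auto intro!: integrable_continuous_interval continuous_intros)
      also have "\<dots> = 0" using h1 by simp
      finally show ?thesis .
    qed
    have hi: "((\<lambda>t. poly P' t * poly P' t) has_integral 0) (cbox 0 (1::real))"
      using integrable_integral[OF int_pp[of P' P']] h2 by (simp add: cbox_interval)
    have z: "poly P' t = 0" if "t \<in> {0..1}" for t
    proof -
      have c: "continuous_on {0..1} (\<lambda>x. poly P' x * poly P' x)" by (intro continuous_intros)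
      show ?thesis using has_integral_0_cbox_imp_0[OF _ _ hi, of t] that c
        by (auto simp: cbox_interval)
    qed
    have P'0: "P' = 0"
    proof (rule ccontr)
      assume "P' \<noteq> 0"
      then have "finite {x. poly P' x = 0}" by (rule poly_roots_finite)
      moreover have "{0..1::real} \<subseteq> {x. poly P' x = 0}" using z by auto
      ultimately have "finite {0..1::real}" by (rule rev_finite_subset)
      then show False using infinite_Icc[of "0::real" 1] by simp
    qed
    define p where "p = (\<Sum>j<q. Polynomial.smult (v $ j) (L (Suc j)))"
    have pd: "pderiv p = 0" using P'0 by (simp add: p_def P'_def pderiv_sum pderiv_smult)
    have const: "poly p x = poly p y" for x y
      by (rule DERIV_isconst_all) (metis pd poly_DERIV poly_0)
    have ps0: "poly p (s 0) = 0"
      using inj_s by (simp add: p_def poly_sum L_def lagrange_poly[symmetric] lagrange_nodes)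
    have psk: "poly p (s (Suc k)) = v $ k" if "k < q" for k
    proof -
      have "poly p (s (Suc k)) = (\<Sum>j<q. v $ j * (if k = j then 1 else 0))"
        using inj_s that by (auto simp: p_def poly_sum L_def lagrange_poly[symmetric] lagrange_nodes
            intro!: sum.cong)
      also have "\<dots> = v $ k" using that by (simp add: if_distrib[of "\<lambda>c. _ * c"] cong: if_cong)
      finally show ?thesis .
    qed
    have "v = 0\<^sub>v q"
    proof (rule eq_vecI)
      fix k assume "k < dim_vec (0\<^sub>v q)"
      then have k: "k < q" by simp
      have "v $ k = 0" using psk[OF k] ps0 const by metis
      then show "v $ k = 0\<^sub>v q $ k" using k by simp
    qed (use v in auto)
    with v show False by simp
  qed
  from det_non_zero_imp_unit[OF Acar det, unfolded Units_def, of "()"]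
  obtain B where B: "B \<in> carrier_mat q q" "B * mat_A s r q = 1\<^sub>m q" "mat_A s r q * B = 1\<^sub>m q"
    by (auto simp: ring_mat_def)
  have "invertible_mat (mat_A s r q)"
    unfolding invertible_mat_def inverts_mat_def square_mat.simps
    using B Acar by (intro conjI exI[of _ B]) auto
  with part2 show ?thesis by blast
qed

end
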